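(* Let $\tilde\sigma,\hat\sigma\in[0,1)$ and $(\tau,\theta)\in\mathcal R_{\tilde\sigma}$. Define $\varphi,\widehat\varphi,\widetilde\varphi,\overline\varphi:\mathbb{R}\to\mathbb{R}$ by $$\varphi(\sigma)=(1-\tau)(\sigma-1)+(1-\tau-\tilde\sigma)(\tau+\theta),\qquad \widehat\varphi(\sigma)=(1-\tau)[(1+\theta)\sigma-1+\tau]-\tilde\sigma(\tau+\theta),$$ $$\widetilde\varphi(\sigma)=\sigma-(1-\tau-\theta)^2-\tilde\sigma(\tau+\theta),\qquad \overline\varphi(\sigma)=[(1+\tau)\widehat\varphi(\sigma)-2\tau\varphi(\sigma)](1+\tau)\widetilde\varphi(\sigma)-(1-\theta)^2\varphi(\sigma)^2.$$ Then there exists $\sigma\in[\hat\sigma,1)$ such that $\varphi(\sigma)\ge0$, $\widehat\varphi(\sigma)\ge0$, $\widetilde\varphi(\sigma)>0$ and $\overline\varphi(\sigma)\ge0$.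
   Context: $\mathcal R_{\tilde\sigma}:=\{(\tau,\theta):\tau\in(-1,1-\tilde\sigma),\ \tau+\theta>0,\ (1-\tau^2)(2-\tau-\theta-\tilde\sigma)-(1-\theta)^2(1-\tau-\tilde\sigma)>0\}$. *)

theory Defs
  imports Complex_Main
begin

definition region_R :: "real \<Rightarrow> (real \<times> real) set" where
  "region_R s = {(\<tau>, \<theta>). -1 < \<tau> \<and> \<tau> < 1 - s \<and> \<tau> + \<theta> > 0 \<and>
     (1 - \<tau>\<^sup>2) * (2 - \<tau> - \<theta> - s) - (1 - \<theta>)\<^sup>2 * (1 - \<tau> - s) > 0}"

end

theory Submission
  imports Defs
begin

lemma ev_pos:
  fixes f :: "real \<Rightarrow> real"
  assumes "continuous_on UNIV f" "f 1 > 0"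
  shows "eventually (\<lambda>x. f x > 0) (at_left 1)"
proof -
  have "isCont f 1" using assms(1) by (simp add: continuous_on_eq_continuous_at)
  hence "(f \<longlongrightarrow> f 1) (at 1)" by (simp add: isCont_def)
  hence "(f \<longlongrightarrow> f 1) (at_left 1)" by (simp add: filterlim_at_split)
  then show ?thesis using assms(2) order_tendstoD(1) by blast
qed

theorem proposition2p6:
  fixes st sh \<tau> \<theta> :: real
    and \<phi> \<phi>hat \<phi>tl \<phi>bar :: "real \<Rightarrow> real"
  assumes "0 \<le> st" "st < 1" "0 \<le> sh" "sh < 1"
    and "(\<tau>, \<theta>) \<in> region_R st"
    and "\<And>\<sigma>. \<phi> \<sigma> = (1 - \<tau>) * (\<sigma> - 1) + (1 - \<tau> - st) * (\<tau> + \<theta>)"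
    and "\<And>\<sigma>. \<phi>hat \<sigma> = (1 - \<tau>) * ((1 + \<theta>) * \<sigma> - 1 + \<tau>) - st * (\<tau> + \<theta>)"
    and "\<And>\<sigma>. \<phi>tl \<sigma> = \<sigma> - (1 - \<tau> - \<theta>)\<^sup>2 - st * (\<tau> + \<theta>)"
    and "\<And>\<sigma>. \<phi>bar \<sigma> = ((1 + \<tau>) * \<phi>hat \<sigma> - 2 * \<tau> * \<phi> \<sigma>) * (1 + \<tau>) * \<phi>tl \<sigma>
                         - (1 - \<theta>)\<^sup>2 * (\<phi> \<sigma>)\<^sup>2"
  shows "\<exists>\<sigma>. sh \<le> \<sigma> \<and> \<sigma> < 1 \<and> \<phi> \<sigma> \<ge> 0 \<and> \<phi>hat \<sigma> \<ge> 0 \<and> \<phi>tl \<sigma> > 0 \<and> \<phi>bar \<sigma> \<ge> 0"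
proof -
  have R: "-1 < \<tau>" "\<tau> < 1 - st" "\<tau> + \<theta> > 0"
    "(1 - \<tau>\<^sup>2) * (2 - \<tau> - \<theta> - st) - (1 - \<theta>)\<^sup>2 * (1 - \<tau> - st) > 0"
    using assms(5) by (auto simp: region_R_def)
  define u where "u = \<tau> + \<theta>"
  define A where "A = (1 - \<tau> - st) * u"
  have u: "u > 0" using R u_def by simp
  have A: "A > 0" using R u by (simp add: A_def)
  have t2: "1 - \<tau>\<^sup>2 > 0" using R assms(1)
    by (simp add: abs_less_iff abs_square_less_1)
  have "(1 - \<theta>)\<^sup>2 * (1 - \<tau> - st) \<ge> 0" using R by simp
  hence "(1 - \<tau>\<^sup>2) * (2 - \<tau> - \<theta> - st) > 0" using R(4) by linarith
  moreover have "(1 - \<tau>\<^sup>2) * (2 - u - st) = (1 - \<tau>\<^sup>2) * (2 - \<tau> - \<theta> - st)" by (simp add: u_def)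
  ultimately have "(1 - \<tau>\<^sup>2) * (2 - u - st) > 0" by linarith
  hence w: "2 - u - st > 0" using t2 by (simp add: zero_less_mult_iff)
  have p1: "\<phi> 1 = A" unfolding assms(6) A_def u_def by algebra
  have p2: "\<phi>hat 1 = A" unfolding assms(7) A_def u_def by algebra
  have p3: "\<phi>tl 1 = u * (2 - u - st)" unfolding assms(8) u_def by algebra
  have p4: "\<phi>bar 1 = A * u * ((1 - \<tau>\<^sup>2) * (2 - \<tau> - \<theta> - st) - (1 - \<theta>)\<^sup>2 * (1 - \<tau> - st))"
    unfolding assms(9) p1 p2 p3 unfolding A_def u_def by algebra
  have c1: "continuous_on UNIV \<phi>" unfolding assms(6)[abs_def] by (intro continuous_intros)
  have c2: "continuous_on UNIV \<phi>hat" unfolding assms(7)[abs_def] by (intro continuous_intros)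
  have c3: "continuous_on UNIV \<phi>tl" unfolding assms(8)[abs_def] by (intro continuous_intros)
  have c4: "continuous_on UNIV \<phi>bar" unfolding assms(9)[abs_def] assms(6,7,8) by (intro continuous_intros)
  have e1: "eventually (\<lambda>x. \<phi> x > 0) (at_left 1)" using ev_pos[OF c1] p1 A by simp
  have e2: "eventually (\<lambda>x. \<phi>hat x > 0) (at_left 1)" using ev_pos[OF c2] p2 A by simp
  have e3: "eventually (\<lambda>x. \<phi>tl x > 0) (at_left 1)" using ev_pos[OF c3] p3 u w by simp
  have "\<phi>bar 1 > 0" unfolding p4 using A u R(4) by simp
  hence e4: "eventually (\<lambda>x. \<phi>bar x > 0) (at_left 1)" using ev_pos[OF c4] by simp
  have e5: "eventually (\<lambda>x. sh < x \<and> x < 1) (at_left 1)"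
    using eventually_at_left_real[OF assms(4)] by (rule eventually_mono) simp
  have "eventually (\<lambda>x. sh < x \<and> x < 1 \<and> \<phi> x > 0 \<and> \<phi>hat x > 0 \<and> \<phi>tl x > 0 \<and> \<phi>bar x > 0) (at_left 1)"
    using e1 e2 e3 e4 e5 by eventually_elim auto
  then obtain x where "sh < x \<and> x < 1 \<and> \<phi> x > 0 \<and> \<phi>hat x > 0 \<and> \<phi>tl x > 0 \<and> \<phi>bar x > 0"
    using eventually_happens'[OF trivial_limit_at_left_real] by blast
  then show ?thesis by (intro exI[of _ x]) auto
qed

end
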